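(* Let $G$ be a finite simple undirected graph, $s\neq t$ vertices and $r\ge2$. Then $$NBP_r(s,t)\le NBP_r^{L}(s,t)+NBP_{r-2}(s,t),$$ and consequently $NBP_r(s,t)\le NBP_1(s,t)+\sum_{m=2}^{r}NBP_m^{L}(s,t)$.
   Context: A nonbacktracking walk of length $r$ from $s$ to $t$ is a sequence $(x_1,\dots,x_{r+1})$ with $x_1=s$, $x_{r+1}=t$, each $\{x_i,x_{i+1}\}$ an edge, and $x_i\ne x_{i+2}$ for $1\le i\le r-1$. $NBP_r(s,t)$ is the number of such walks ($NBP_0(s,t)=0$ for $s\neq t$), and $NBP_r^L(s,t)$ is the number of such walks whose last edge $\{x_r,x_{r+1}\}$ is different from the first edge $\{x_1,x_2\}$. *)

theory Defs
  imports Main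
begin

definition simple_graph :: "'a set \<Rightarrow> ('a \<Rightarrow> 'a \<Rightarrow> bool) \<Rightarrow> bool" where
  "simple_graph V E \<longleftrightarrow> finite V \<and> (\<forall>x y. E x y \<longrightarrow> x \<in> V \<and> y \<in> V)
     \<and> (\<forall>x y. E x y \<longrightarrow> E y x) \<and> (\<forall>x. \<not> E x x)"

text \<open>Nonbacktracking walks of length r from s to t, as lists
  [x_1,...,x_(r+1)] (0-indexed in Isabelle).\<close>
definition nb_walks :: "('a \<Rightarrow> 'a \<Rightarrow> bool) \<Rightarrow> nat \<Rightarrow> 'a \<Rightarrow> 'a \<Rightarrow> 'a list set" where
  "nb_walks E r s t = {xs. length xs = r + 1 \<and> xs ! 0 = s \<and> xs ! r = t
     \<and> (\<forall>i<r. E (xs ! i) (xs ! (i+1)))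
     \<and> (\<forall>i. i + 2 \<le> r \<longrightarrow> xs ! i \<noteq> xs ! (i+2))}"

definition NBP :: "('a \<Rightarrow> 'a \<Rightarrow> bool) \<Rightarrow> nat \<Rightarrow> 'a \<Rightarrow> 'a \<Rightarrow> nat" where
  "NBP E r s t = card (nb_walks E r s t)"

definition NBPL :: "('a \<Rightarrow> 'a \<Rightarrow> bool) \<Rightarrow> nat \<Rightarrow> 'a \<Rightarrow> 'a \<Rightarrow> nat" where
  "NBPL E r s t = card {xs \<in> nb_walks E r s t.
      {xs ! (r-1), xs ! r} \<noteq> {xs ! 0, xs ! 1}}"

end

theory Submission
  imports Defs
begin

lemma nb_finite:
  assumes "simple_graph V E"
  shows "finite (nb_walks E r s t)"
proof -
  have "nb_walks E r s t \<subseteq> {xs. set xs \<subseteq> insert s V \<and> length xs = r + 1}"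
  proof
    fix xs assume xs: "xs \<in> nb_walks E r s t"
    have "set xs \<subseteq> insert s V"
    proof
      fix x assume "x \<in> set xs"
      then obtain i where i: "i < length xs" "xs ! i = x" by (auto simp: in_set_conv_nth)
      show "x \<in> insert s V"
      proof (cases "r = 0")
        case True then show ?thesis using xs i by (auto simp: nb_walks_def)
      next
        case False
        show ?thesis
        proof (cases "i < r")
          case True
          then have "E (xs ! i) (xs ! (i+1))" using xs by (auto simp: nb_walks_def)
          then show ?thesis using assms i by (auto simp: simple_graph_def)
        next
          case False2: False
          then have "i = r" using xs i by (auto simp: nb_walks_def)
          moreover have hh: "\<forall>i<r. E (xs ! i) (xs ! (i+1))" using xs by (simp add: nb_walks_def)
          moreover have "E (xs ! (r-1)) (xs ! (r-1+1))" using hh[rule_format, of "r-1"] \<open>r \<noteq> 0\<close> by simp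
          ultimately show ?thesis using assms i \<open>r \<noteq> 0\<close> by (auto simp: simple_graph_def)
        qed
      qed
    qed
    then show "xs \<in> {xs. set xs \<subseteq> insert s V \<and> length xs = r + 1}" using xs by (auto simp: nb_walks_def)
  qed
  moreover have "finite {xs. set xs \<subseteq> insert s V \<and> length xs = r + 1}"
    using assms by (intro finite_lists_length_eq) (auto simp: simple_graph_def)
  ultimately show ?thesis by (rule finite_subset)
qed

lemma rev_mid_nth:
  assumes "length xs = r + 1" "i < r - 1"
  shows "rev (butlast (tl xs)) ! i = xs ! (r - 1 - i)"
proof -
  have "Suc (r - Suc (Suc i)) = r - Suc i" using assms by simp
  then show ?thesis using assms by (simp add: rev_nth nth_butlast nth_tl)
qed

lemma list_decomp:
  assumes "length xs = r + 1" "r \<ge> 1"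
  shows "xs = xs ! 0 # butlast (tl xs) @ [xs ! r]"
proof (cases xs)
  case Nil then show ?thesis using assms by simp
next
  case (Cons a ys)
  then have "ys \<noteq> []" using assms by auto
  then have "ys = butlast ys @ [last ys]" by simp
  moreover have "last ys = xs ! r" using Cons assms \<open>ys \<noteq> []\<close> by (simp add: last_conv_nth)
  ultimately show ?thesis using Cons by simp
qed

lemma part1:
  assumes G: "simple_graph V E" and st: "s \<noteq> t" and r: "r \<ge> 2"
  shows "NBP E r s t \<le> NBPL E r s t + NBP E (r-2) s t"
proof -
  define A where "A = nb_walks E r s t"
  define P where "P = (\<lambda>xs::'a list. {xs ! (r-1), xs ! r} \<noteq> {xs ! 0, xs ! (1::nat)})"
  define B where "B = {xs \<in> A. P xs}"
  define C where "C = {xs \<in> A. \<not> P xs}"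
  define f where "f = (\<lambda>xs::'a list. rev (butlast (tl xs)))"
  have fA: "finite A" using nb_finite[OF G] A_def by simp
  have AB: "A = B \<union> C" "B \<inter> C = {}" unfolding B_def C_def by auto
  have cardA: "card A = card B + card C"
    using AB fA by (simp add: card_Un_disjoint)
  have sym: "\<And>x y. E x y \<Longrightarrow> E y x" using G by (auto simp: simple_graph_def)
  have Cprops: "length xs = r + 1 \<and> xs ! 0 = s \<and> xs ! r = t \<and> xs ! 1 = t \<and> xs ! (r-1) = s \<and> r \<ge> 3
     \<and> (\<forall>i<r. E (xs ! i) (xs ! (i+1))) \<and> (\<forall>i. i + 2 \<le> r \<longrightarrow> xs ! i \<noteq> xs ! (i+2))" if "xs \<in> C" for xs
  proof -
    have xs: "xs \<in> nb_walks E r s t" "{xs ! (r-1), xs ! r} = {xs ! 0, xs ! (1::nat)}"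
      using that unfolding C_def A_def P_def by auto
    then have b: "length xs = r + 1" "xs ! 0 = s" "xs ! r = t"
      "(\<forall>i<r. E (xs ! i) (xs ! (i+1)))" "(\<forall>i. i + 2 \<le> r \<longrightarrow> xs ! i \<noteq> xs ! (i+2))"
      by (auto simp: nb_walks_def)
    have e: "{xs ! (r-1), t} = {s, xs ! 1}" using xs(2) b by simp
    then have "xs ! 1 = t" "xs ! (r-1) = s" using st by (auto simp: doubleton_eq_iff)
    moreover have "r \<noteq> 2" using \<open>xs ! 1 = t\<close> \<open>xs ! (r-1) = s\<close> st by auto
    ultimately show ?thesis using b r by auto
  qed
  have inj: "inj_on f C"
  proof
    fix xs ys assume xs: "xs \<in> C" and ys: "ys \<in> C" and eq: "f xs = f ys"
    have "xs = xs ! 0 # butlast (tl xs) @ [xs ! r]" using Cprops[OF xs] by (intro list_decomp) auto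
    moreover have "ys = ys ! 0 # butlast (tl ys) @ [ys ! r]" using Cprops[OF ys] by (intro list_decomp) auto
    moreover have "butlast (tl xs) = butlast (tl ys)" using eq unfolding f_def by simp
    ultimately show "xs = ys" using Cprops[OF xs] Cprops[OF ys] by metis
  qed
  have img: "f ` C \<subseteq> nb_walks E (r-2) s t"
  proof
    fix zs assume "zs \<in> f ` C"
    then obtain xs where xs: "xs \<in> C" and zs: "zs = f xs" by auto
    note c = Cprops[OF xs]
    have nth: "\<And>i. i < r - 1 \<Longrightarrow> zs ! i = xs ! (r - 1 - i)"
      using c zs f_def rev_mid_nth by metis
    have len: "length zs = r - 2 + 1"
    proof -
      have "length zs = r - 1" using c zs f_def by simp
      then show ?thesis using c by linarith
    qed
    have z0: "zs ! 0 = s" using nth[of 0] c by simp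
    have zr: "zs ! (r-2) = t"
    proof -
      have "r - 2 < r - 1" "r - 1 - (r - 2) = 1" using c by auto
      then show ?thesis using nth[of "r-2"] c by simp
    qed
    have edges: "\<forall>i<r-2. E (zs ! i) (zs ! (i+1))"
    proof (intro allI impI)
      fix i assume i: "i < r - 2"
      have "E (xs ! (r-2-i)) (xs ! (r-2-i+1))" using c i by auto
      moreover have "r-2-i+1 = r-1-i" "r - 1 - (i+1) = r-2-i" using i by auto
      ultimately show "E (zs ! i) (zs ! (i+1))" using nth[of i] nth[of "i+1"] i sym by auto
    qed
    have nb: "\<forall>i. i + 2 \<le> r-2 \<longrightarrow> zs ! i \<noteq> zs ! (i+2)"
    proof (intro allI impI)
      fix i assume i: "i + 2 \<le> r - 2"
      have "xs ! (r-3-i) \<noteq> xs ! (r-3-i+2)" using c i by auto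
      moreover have "r-3-i+2 = r-1-i" "r - 1 - (i+2) = r-3-i" using i by auto
      ultimately show "zs ! i \<noteq> zs ! (i+2)" using nth[of i] nth[of "i+2"] i by auto
    qed
    show "zs \<in> nb_walks E (r-2) s t" unfolding nb_walks_def using len z0 zr edges nb by auto
  qed
  have "card C \<le> card (nb_walks E (r-2) s t)"
    using card_inj_on_le[OF inj img nb_finite[OF G]] .
  moreover have "NBPL E r s t = card B" unfolding NBPL_def B_def A_def P_def by simp
  ultimately show ?thesis using cardA unfolding NBP_def A_def by simp
qed

lemma NBP0: "s \<noteq> t \<Longrightarrow> NBP E 0 s t = 0"
proof -
  assume "s \<noteq> t"
  then have "nb_walks E 0 s t = {}" by (auto simp: nb_walks_def)
  then show ?thesis by (simp add: NBP_def)
qed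

lemma part2:
  assumes G: "simple_graph V E" and st: "s \<noteq> t"
  shows "r \<ge> 1 \<Longrightarrow> NBP E r s t \<le> NBP E 1 s t + (\<Sum>m=2..r. NBPL E m s t)"
proof (induction r rule: less_induct)
  case (less r)
  show ?case
  proof (cases "r \<le> 2")
    case True
    then consider "r = 1" | "r = 2" using less.prems by linarith
    then show ?thesis
    proof cases
      case 1 then show ?thesis by simp
    next
      case 2 then show ?thesis using part1[OF G st, of 2] NBP0[OF st] by simp
    qed
  next
    case False
    have IH: "NBP E (r-2) s t \<le> NBP E 1 s t + (\<Sum>m=2..r-2. NBPL E m s t)"
      using less.IH[of "r-2"] False by auto
    have "(\<Sum>m=2..r-2. NBPL E m s t) \<le> (\<Sum>m=2..r-1. NBPL E m s t)"
      by (intro sum_mono2) auto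
    moreover have "(\<Sum>m=2..r. NBPL E m s t) = (\<Sum>m=2..r-1. NBPL E m s t) + NBPL E r s t"
    proof -
      obtain n where n: "r = Suc n" using False by (cases r) auto
      show ?thesis using False unfolding n by (simp add: sum.cl_ivl_Suc)
    qed
    ultimately show ?thesis using IH part1[OF G st, of r] False by linarith
  qed
qed

theorem mainTheorem6:
  fixes V :: "'a set" and E :: "'a \<Rightarrow> 'a \<Rightarrow> bool" and s t :: 'a and r :: nat
  assumes "simple_graph V E" and "s \<in> V" and "t \<in> V" and "s \<noteq> t" and "r \<ge> 2"
  shows "NBP E r s t \<le> NBPL E r s t + NBP E (r-2) s t
    \<and> NBP E r s t \<le> NBP E 1 s t + (\<Sum>m=2..r. NBPL E m s t)"
  using part1[OF assms(1,4,5)] part2[OF assms(1,4)] assms(5) by auto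

end
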